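(* Let $X+_fW$, $Y$ and $Z$ be Hausdorff topological spaces, let $\pi:Y\to X$ and $\varpi:Z\to W$ be continuous maps with $\varpi$ injective, and let $f^\ast:\mathrm{Closed}(Y)\to\mathrm{Closed}(Z)$ be $f^\ast(A)=\mathrm{Cl}_Z\big(\varpi^{-1}(f(\mathrm{Cl}_X(\pi(A))))\big)$. Then $Y+_{f^\ast}Z$ is Hausdorff.
   Context: $\mathrm{Closed}(A)$ is the set of closed subsets of a space $A$; $f:\mathrm{Closed}(X)\to\mathrm{Closed}(W)$ is admissible if $f(\emptyset)=\emptyset$ and $f$ preserves finite unions ($f^\ast$ is then admissible as well); $X+_fW$ is $X\sqcup W$ with closed sets the $D$ such that $D\cap X$ is closed in $X$, $D\cap W$ closed in $W$ and $f(D\cap X)\subseteq D$. *)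

theory Defs
  imports "HOL-Analysis.Analysis"
begin

definition admissible :: "'a topology \<Rightarrow> 'b topology \<Rightarrow> ('a set \<Rightarrow> 'b set) \<Rightarrow> bool" where
  "admissible X W f \<longleftrightarrow>
     (\<forall>A. closedin X A \<longrightarrow> closedin W (f A)) \<and>
     f {} = {} \<and>
     (\<forall>A B. closedin X A \<longrightarrow> closedin X B \<longrightarrow> f (A \<union> B) = f A \<union> f B)"

text \<open>Closed sets of X +_f W: subsets D of the disjoint union with D \<inter> X closed
  in X, D \<inter> W closed in W and f(D \<inter> X) \<subseteq> D.\<close>
definition glue_closed :: "'a topology \<Rightarrow> 'b topology \<Rightarrow> ('a set \<Rightarrow> 'b set) \<Rightarrow> ('a + 'b) set \<Rightarrow> bool" where
  "glue_closed X W f D \<longleftrightarrow>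
     D \<subseteq> Inl ` topspace X \<union> Inr ` topspace W \<and>
     closedin X (Inl -` D) \<and>
     closedin W (Inr -` D) \<and>
     Inr ` f (Inl -` D) \<subseteq> D"

definition glue_top :: "'a topology \<Rightarrow> 'b topology \<Rightarrow> ('a set \<Rightarrow> 'b set) \<Rightarrow> ('a + 'b) topology" where
  "glue_top X W f = topology (\<lambda>U. U \<subseteq> Inl ` topspace X \<union> Inr ` topspace W \<and>
       glue_closed X W f ((Inl ` topspace X \<union> Inr ` topspace W) - U))"

definition fstar :: "'a topology \<Rightarrow> 'd topology \<Rightarrow> ('c \<Rightarrow> 'a) \<Rightarrow> ('d \<Rightarrow> 'b)
                     \<Rightarrow> ('a set \<Rightarrow> 'b set) \<Rightarrow> 'c set \<Rightarrow> 'd set" where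
  "fstar X Z \<pi> \<omega> f A = Z closure_of (topspace Z \<inter> \<omega> -` f (X closure_of (\<pi> ` A)))"

end

theory Submission
  imports Defs
begin

lemma adm_mono:
  assumes "admissible X W f" "closedin X A" "closedin X B" "A \<subseteq> B"
  shows "f A \<subseteq> f B"
proof -
  have "f B = f (A \<union> B)" using assms(4) by (simp add: Un_absorb1)
  also have "\<dots> = f A \<union> f B" using assms unfolding admissible_def by blast
  finally show ?thesis by blast
qed

definition gopen :: "'a topology \<Rightarrow> 'b topology \<Rightarrow> ('a set \<Rightarrow> 'b set) \<Rightarrow> ('a + 'b) set \<Rightarrow> bool" where
  "gopen X W f U \<longleftrightarrow> U \<subseteq> Inl ` topspace X \<union> Inr ` topspace W \<and>
     openin X (Inl -` U) \<and> openin W (Inr -` U) \<and>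
     f (topspace X - Inl -` U) \<inter> Inr -` U = {}"

lemma glue_pred_eq:
  assumes "admissible X W f"
  shows "(\<lambda>U. U \<subseteq> Inl ` topspace X \<union> Inr ` topspace W \<and>
       glue_closed X W f ((Inl ` topspace X \<union> Inr ` topspace W) - U)) = gopen X W f"
proof (rule ext)
  fix U
  let ?S = "Inl ` topspace X \<union> Inr ` topspace W"
  show "(U \<subseteq> ?S \<and> glue_closed X W f (?S - U)) = gopen X W f U"
  proof (cases "U \<subseteq> ?S")
    case True
    have e1: "Inl -` (?S - U) = topspace X - Inl -` U" by auto
    have e2: "Inr -` (?S - U) = topspace W - Inr -` U" by auto
    have s1: "Inl -` U \<subseteq> topspace X" "Inr -` U \<subseteq> topspace W" using True by auto
    have "closedin X (topspace X - Inl -` U) \<Longrightarrow> f (topspace X - Inl -` U) \<subseteq> topspace W"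
      using assms unfolding admissible_def by (meson closedin_subset)
    then have imp: "closedin X (topspace X - Inl -` U) \<Longrightarrow>
        (Inr ` f (topspace X - Inl -` U) \<subseteq> ?S - U \<longleftrightarrow> f (topspace X - Inl -` U) \<inter> Inr -` U = {})"
      by blast
    have o1: "openin X (Inl -` U) \<longleftrightarrow> closedin X (topspace X - Inl -` U)"
      using s1(1) by (simp add: openin_closedin_eq)
    have o2: "openin W (Inr -` U) \<longleftrightarrow> closedin W (topspace W - Inr -` U)"
      using s1(2) by (simp add: openin_closedin_eq)
    have "?S - U \<subseteq> ?S" by blast
    then show ?thesis unfolding glue_closed_def gopen_def e1 e2 o1 o2 using True imp
      by (meson Diff_subset)
  next
    case False
    then show ?thesis unfolding gopen_def by blast
  qed
qed

lemma gopen_istopology: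
  assumes "admissible X W f"
  shows "istopology (gopen X W f)"
  unfolding istopology_def
proof (intro conjI allI impI)
  fix S T assume S: "gopen X W f S" and T: "gopen X W f T"
  have cS: "closedin X (topspace X - Inl -` S)" "closedin X (topspace X - Inl -` T)"
    using S T unfolding gopen_def by auto
  have eq: "topspace X - Inl -` (S \<inter> T) = (topspace X - Inl -` S) \<union> (topspace X - Inl -` T)" by auto
  have "f (topspace X - Inl -` (S \<inter> T)) = f (topspace X - Inl -` S) \<union> f (topspace X - Inl -` T)"
    unfolding eq using assms cS unfolding admissible_def by blast
  then show "gopen X W f (S \<inter> T)" using S T unfolding gopen_def
    by (auto simp: vimage_Int)
next
  fix K assume K: "\<forall>S\<in>K. gopen X W f S"
  have o1: "openin X (Inl -` \<Union>K)"
    using K unfolding gopen_def vimage_Union by (auto intro: openin_Union)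
  have o2: "openin W (Inr -` \<Union>K)"
    using K unfolding gopen_def vimage_Union by (auto intro: openin_Union)
  have "f (topspace X - Inl -` \<Union>K) \<inter> Inr -` S = {}" if "S \<in> K" for S
  proof -
    have "f (topspace X - Inl -` \<Union>K) \<subseteq> f (topspace X - Inl -` S)"
      apply (rule adm_mono[OF assms])
      using K that o1 unfolding gopen_def by auto
    then show ?thesis using K that unfolding gopen_def by auto
  qed
  then have d: "f (topspace X - Inl -` \<Union>K) \<inter> Inr -` \<Union>K = {}"
    by (auto simp only: vimage_Union)
  have "\<Union>K \<subseteq> Inl ` topspace X \<union> Inr ` topspace W"
    using K unfolding gopen_def by blast
  then show "gopen X W f (\<Union>K)" using o1 o2 d unfolding gopen_def by blast
qed

lemma openin_glue:
  assumes "admissible X W f"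
  shows "openin (glue_top X W f) U \<longleftrightarrow> gopen X W f U"
  unfolding glue_top_def glue_pred_eq[OF assms] using gopen_istopology[OF assms] by simp

lemma topspace_glue:
  assumes "admissible X W f"
  shows "topspace (glue_top X W f) = Inl ` topspace X \<union> Inr ` topspace W"
proof -
  have "gopen X W f (Inl ` topspace X \<union> Inr ` topspace W)"
  proof -
    have a: "Inl -` (Inl ` topspace X \<union> Inr ` topspace W) = topspace X" by auto
    have b: "Inr -` (Inl ` topspace X \<union> Inr ` topspace W) = topspace W" by auto
    have "f {} = {}" using assms unfolding admissible_def by blast
    then show ?thesis unfolding gopen_def a b by simp
  qed
  moreover have "\<And>U. gopen X W f U \<Longrightarrow> U \<subseteq> Inl ` topspace X \<union> Inr ` topspace W"
    unfolding gopen_def by blast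
  ultimately show ?thesis unfolding topspace_def openin_glue[OF assms] by blast
qed

lemma fstar_adm: "admissible Y Z (fstar X Z \<pi> \<omega> f)" if "admissible X W f"
  using that unfolding admissible_def fstar_def
  by (simp add: image_Un closure_of_Un vimage_Un Int_Un_distrib)


lemma preimage_open:
  assumes adm: "admissible X W f"
    and cpi: "continuous_map Y X \<pi>" and com: "continuous_map Z W \<omega>"
    and Q: "gopen X W f Q"
  defines "g \<equiv> case_sum (\<lambda>y. Inl (\<pi> y)) (\<lambda>z. Inr (\<omega> z))"
  shows "gopen Y Z (fstar X Z \<pi> \<omega> f) {p \<in> Inl ` topspace Y \<union> Inr ` topspace Z. g p \<in> Q}"
    (is "gopen Y Z ?F ?Q'")
proof -
  have l: "Inl -` ?Q' = {y \<in> topspace Y. \<pi> y \<in> Inl -` Q}" by (auto simp: g_def)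
  have r: "Inr -` ?Q' = {z \<in> topspace Z. \<omega> z \<in> Inr -` Q}" by (auto simp: g_def)
  have oX: "openin X (Inl -` Q)" and oW: "openin W (Inr -` Q)"
    and dis: "f (topspace X - Inl -` Q) \<inter> Inr -` Q = {}" using Q unfolding gopen_def by auto
  let ?DX = "topspace X - Inl -` Q"
  have cDX: "closedin X ?DX" using oX by auto
  have sub1: "\<pi> ` (topspace Y - Inl -` ?Q') \<subseteq> ?DX"
    unfolding l using cpi by (auto simp: continuous_map_def)
  have "X closure_of (\<pi> ` (topspace Y - Inl -` ?Q')) \<subseteq> ?DX"
    by (rule closure_of_minimal[OF sub1 cDX])
  then have "f (X closure_of (\<pi> ` (topspace Y - Inl -` ?Q'))) \<subseteq> f ?DX"
    by (rule adm_mono[OF adm closedin_closure_of cDX])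
  then have sub2: "topspace Z \<inter> \<omega> -` f (X closure_of (\<pi> ` (topspace Y - Inl -` ?Q')))
      \<subseteq> {z \<in> topspace Z. \<omega> z \<in> topspace W - Inr -` Q}"
    using dis com by (auto simp: continuous_map_def)
  have cl: "closedin Z {z \<in> topspace Z. \<omega> z \<in> topspace W - Inr -` Q}"
    by (rule closedin_continuous_map_preimage[OF com]) (use oW in auto)
  have "?F (topspace Y - Inl -` ?Q') \<subseteq> {z \<in> topspace Z. \<omega> z \<in> topspace W - Inr -` Q}"
    unfolding fstar_def by (rule closure_of_minimal[OF sub2 cl])
  then have "?F (topspace Y - Inl -` ?Q') \<inter> Inr -` ?Q' = {}" unfolding r by auto
  moreover have "openin Y (Inl -` ?Q')" unfolding l
    by (rule openin_continuous_map_preimage[OF cpi oX])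
  moreover have "openin Z (Inr -` ?Q')" unfolding r
    by (rule openin_continuous_map_preimage[OF com oW])
  ultimately show ?thesis unfolding gopen_def by blast
qed

theorem mainTheorem19:
  fixes X :: "'a topology" and W :: "'b topology"
    and Y :: "'c topology" and Z :: "'d topology"
    and f :: "'a set \<Rightarrow> 'b set" and \<pi> :: "'c \<Rightarrow> 'a" and \<omega> :: "'d \<Rightarrow> 'b"
  assumes "admissible X W f"
    and "Hausdorff_space (glue_top X W f)"
    and "Hausdorff_space Y" and "Hausdorff_space Z"
    and "continuous_map Y X \<pi>" and "continuous_map Z W \<omega>"
    and "inj_on \<omega> (topspace Z)"
  shows "Hausdorff_space (glue_top Y Z (fstar X Z \<pi> \<omega> f))"
proof -
  note adm = assms(1)
  note adm2 = fstar_adm[OF adm, of Y Z \<pi> \<omega>]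
  let ?F = "fstar X Z \<pi> \<omega> f"
  let ?S = "Inl ` topspace Y \<union> Inr ` topspace Z"
  define g where "g \<equiv> case_sum (\<lambda>y. Inl (\<pi> y)) (\<lambda>z. Inr (\<omega> z)) :: 'c + 'd \<Rightarrow> 'a + 'b"
  have gS: "g p \<in> topspace (glue_top X W f)" if "p \<in> ?S" for p
    using that assms(5,6) unfolding topspace_glue[OF adm] g_def
    by (auto simp: continuous_map_def)
  have sep_g: "\<exists>U V. openin (glue_top Y Z ?F) U \<and> openin (glue_top Y Z ?F) V \<and> p \<in> U \<and> q \<in> V \<and> disjnt U V"
    if p: "p \<in> ?S" and q: "q \<in> ?S" and ne: "g p \<noteq> g q" for p q
  proof -
    obtain O1 O2 where o: "openin (glue_top X W f) O1" "openin (glue_top X W f) O2"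
      "g p \<in> O1" "g q \<in> O2" "disjnt O1 O2"
      using assms(2) gS[OF p] gS[OF q] ne unfolding Hausdorff_space_def by blast
    show ?thesis
      apply (rule exI[of _ "{p \<in> ?S. g p \<in> O1}"], rule exI[of _ "{p \<in> ?S. g p \<in> O2}"])
      using o p q preimage_open[OF adm assms(5,6), of O1] preimage_open[OF adm assms(5,6), of O2]
      unfolding openin_glue[OF adm] openin_glue[OF adm2] g_def disjnt_def by auto
  qed
  show ?thesis unfolding Hausdorff_space_def topspace_glue[OF adm2]
  proof (intro allI impI)
    fix p q assume H: "p \<in> ?S \<and> q \<in> ?S \<and> p \<noteq> q"
    show "\<exists>U V. openin (glue_top Y Z ?F) U \<and> openin (glue_top Y Z ?F) V \<and> p \<in> U \<and> q \<in> V \<and> disjnt U V"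
    proof (cases "\<exists>y1 y2. p = Inl y1 \<and> q = Inl y2")
      case True
      then obtain y1 y2 where pq: "p = Inl y1" "q = Inl y2" by blast
      with H have y: "y1 \<in> topspace Y" "y2 \<in> topspace Y" "y1 \<noteq> y2" by auto
      then obtain V1 V2 where v: "openin Y V1" "openin Y V2" "y1 \<in> V1" "y2 \<in> V2" "disjnt V1 V2"
        using assms(3) unfolding Hausdorff_space_def by blast
      have go: "gopen Y Z ?F (Inl ` V)" if "openin Y V" for V
      proof -
        have e1: "Inl -` Inl ` V = V" by auto
        have e2: "Inr -` Inl ` V = ({} :: 'd set)" by auto
        show ?thesis unfolding gopen_def e1 e2 using that openin_subset[OF that] by auto
      qed
      show ?thesis
        apply (rule exI[of _ "Inl ` V1"], rule exI[of _ "Inl ` V2"])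
        using go v pq unfolding openin_glue[OF adm2] disjnt_def by auto
    next
      case False
      have "g p \<noteq> g q"
      proof (cases p)
        case (Inl y1)
        then obtain z2 where "q = Inr z2" using False by (cases q) auto
        then show ?thesis using Inl unfolding g_def by simp
      next
        case (Inr z1)
        show ?thesis
        proof (cases q)
          case (Inl y2)
          then show ?thesis using Inr unfolding g_def by simp
        next
          case (Inr z2)
          have "z1 \<in> topspace Z" "z2 \<in> topspace Z" "z1 \<noteq> z2"
            using H Inr \<open>p = Inr z1\<close> by auto
          then have "\<omega> z1 \<noteq> \<omega> z2" using assms(7) unfolding inj_on_def by blast
          then show ?thesis using Inr \<open>p = Inr z1\<close> unfolding g_def by simp
        qed
      qed
      then show ?thesis using sep_g H by blast
    qed
  qed
qed

end
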